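(* Let $1/4\le\beta<1/3$ and let $G$ be a graph of order $n$ with minimum degree $(1-\beta)n$. Then $$(1+3\beta)k_3+\frac{2}{1-2\beta}\left(1-3\beta+\frac{4\beta-1}{29-75\beta}\right)\sum_{T\in\mathcal{K}_3}D_+(T)\ \ge\ 2(1-2\beta)\beta n k_2+\frac{4k_4}{n}.$$ Moreover, if equality holds, then $G$ is $(1-\beta)n$-regular and every edge $e$ satisfies $D(e)=1-2\beta$ or $D(e)=2\beta$.
   Context: All graphs are finite and simple. For a graph $G$, $\mathcal{K}_t$ is the set of $t$-cliques and $k_t=|\mathcal{K}_t|$. The degree $d(T)$ of a clique $T$ is the number of cliques with one more vertex containing $T$, and $D(T)=d(T)/n$. Here $p=\lceil\beta^{-1}\rceil-1=3$. For $T\in\mathcal{K}_t$, $1\le t\le 4$, $D_-(T)=\min\{D(T),(4-t)\beta\}$ and $D_+(T)=D(T)-D_-(T)$. *)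

theory Defs
  imports Complex_Main
begin

definition simple_graph :: "'a set \<Rightarrow> ('a \<Rightarrow> 'a \<Rightarrow> bool) \<Rightarrow> bool" where
  "simple_graph V E \<longleftrightarrow> finite V \<and> (\<forall>u v. E u v \<longrightarrow> u \<in> V \<and> v \<in> V)
     \<and> (\<forall>u v. E u v \<longrightarrow> E v u) \<and> (\<forall>u. \<not> E u u)"

definition vdeg :: "'a set \<Rightarrow> ('a \<Rightarrow> 'a \<Rightarrow> bool) \<Rightarrow> 'a \<Rightarrow> nat" where
  "vdeg V E v = card {u \<in> V. E v u}"

definition cliques :: "'a set \<Rightarrow> ('a \<Rightarrow> 'a \<Rightarrow> bool) \<Rightarrow> nat \<Rightarrow> 'a set set" where
  "cliques V E t = {S. S \<subseteq> V \<and> card S = t \<and> (\<forall>u\<in>S. \<forall>v\<in>S. u \<noteq> v \<longrightarrow> E u v)}"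

definition kcl :: "'a set \<Rightarrow> ('a \<Rightarrow> 'a \<Rightarrow> bool) \<Rightarrow> nat \<Rightarrow> nat" where
  "kcl V E t = card (cliques V E t)"

definition cdeg :: "'a set \<Rightarrow> ('a \<Rightarrow> 'a \<Rightarrow> bool) \<Rightarrow> 'a set \<Rightarrow> nat" where
  "cdeg V E T = card {S \<in> cliques V E (card T + 1). T \<subseteq> S}"

definition Dn :: "'a set \<Rightarrow> ('a \<Rightarrow> 'a \<Rightarrow> bool) \<Rightarrow> 'a set \<Rightarrow> real" where
  "Dn V E T = real (cdeg V E T) / real (card V)"

definition Dminus :: "real \<Rightarrow> 'a set \<Rightarrow> ('a \<Rightarrow> 'a \<Rightarrow> bool) \<Rightarrow> 'a set \<Rightarrow> real" where
  "Dminus \<beta> V E T = min (Dn V E T) ((4 - real (card T)) * \<beta>)"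

definition Dplus :: "real \<Rightarrow> 'a set \<Rightarrow> ('a \<Rightarrow> 'a \<Rightarrow> bool) \<Rightarrow> 'a set \<Rightarrow> real" where
  "Dplus \<beta> V E T = Dn V E T - Dminus \<beta> V E T"

end

theory Submission
  imports Defs
begin


lemma keyC:
  fixes \<beta> :: real
  assumes b1: "1/4 \<le> \<beta>" and b2: "\<beta> < 1/3"
  defines "C \<equiv> 2 / (1 - 2*\<beta>) * (1 - 3*\<beta> + (4*\<beta> - 1) / (29 - 75*\<beta>))"
  shows "C \<le> 1" and "(1 - C) * (1 - \<beta>) < 1 - 2*\<beta>"
proof -
  have d1: "1 - 2*\<beta> > 0" using b2 by simp
  have d2: "29 - 75*\<beta> > 0" using b2 by simp
  define D where "D = (1-2*\<beta>)*(29-75*\<beta>)"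
  have Dp: "D > 0" using d1 d2 unfolding D_def by simp
  define u where "u = 2 / (1 - 2*\<beta>)"
  define w where "w = (4*\<beta> - 1) / (29 - 75*\<beta>)"
  have u: "u * (1 - 2*\<beta>) = 2" using d1 unfolding u_def by (simp add: field_simps)
  have w: "w * (29 - 75*\<beta>) = 4*\<beta> - 1" using d2 unfolding w_def by (simp add: field_simps)
  have "C * D = (u * (1 - 2*\<beta>)) * ((1-3*\<beta>)*(29-75*\<beta>) + w * (29 - 75*\<beta>))"
    unfolding C_def D_def u_def[symmetric] w_def[symmetric] by (simp add: algebra_simps)
  then have hc: "C * D = 2*((1-3*\<beta>)*(29-75*\<beta>) + 4*\<beta> - 1)"
    using u w by simp
  have h: "(1 - C) * D = 3*(4*\<beta>-1)*(9-25*\<beta>)"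
    using hc unfolding D_def by (simp add: algebra_simps)
  have n1: "3*(4*\<beta>-1)*(9-25*\<beta>) \<ge> 0" using b1 b2 by simp
  show "C \<le> 1" using h n1 Dp by (metis diff_ge_0_iff_ge zero_le_mult_iff linorder_not_le)
  have q: "200*\<beta>^2 - 233*\<beta> + 56 > 0"
  proof -
    have "200*\<beta>^2 - 233*\<beta> + 56 = 200*(\<beta>-1/3)^2 - (299/3)*\<beta> + 304/9"
      by (simp add: power2_eq_square algebra_simps)
    moreover have "(\<beta>-1/3)^2 \<ge> 0" by simp
    ultimately show ?thesis using b2 by linarith
  qed
  have P: "(1-2*\<beta>)*D - 3*(4*\<beta>-1)*(9-25*\<beta>)*(1-\<beta>) = (1-3*\<beta>)*(200*\<beta>^2-233*\<beta>+56)"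
    unfolding D_def by (simp add: power2_eq_square algebra_simps)
  have Ppos: "(1-3*\<beta>)*(200*\<beta>^2-233*\<beta>+56) > 0" using q b2 by simp
  have "((1 - C) * (1 - \<beta>)) * D < (1 - 2*\<beta>) * D"
  proof -
    have "((1 - C) * (1 - \<beta>)) * D = ((1-C)*D)*(1-\<beta>)" by (simp add: ac_simps)
    also have "\<dots> = 3*(4*\<beta>-1)*(9-25*\<beta>)*(1-\<beta>)" using h by simp
    finally show ?thesis using P Ppos by linarith
  qed
  then show "(1 - C) * (1 - \<beta>) < 1 - 2*\<beta>" using Dp by simp
qed


lemma chord:
  fixes L U x :: real
  assumes "0 < L" "L \<le> x" "x \<le> U"
  shows "1/x = (L+U-x)/(L*U) - (x-L)*(U-x)/(x*L*U)" and "(x-L)*(U-x)/(x*L*U) \<ge> 0"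
proof -
  have x0: "x > 0" "U > 0" using assms by auto
  show "1/x = (L+U-x)/(L*U) - (x-L)*(U-x)/(x*L*U)"
    using x0 assms(1) by (simp add: field_simps)
  show "(x-L)*(U-x)/(x*L*U) \<ge> 0" using x0 assms by simp
qed

lemma chord0:
  fixes L U x :: real
  assumes "0 < L" "L \<le> x" "x \<le> U" "(x-L)*(U-x)/(x*L*U) = 0"
  shows "x = L \<or> x = U"
  using assms by auto


lemma tri_ineq:
  fixes \<beta> C y x1 x2 x3 :: real
  assumes b1: "1/4 \<le> \<beta>" and b2: "\<beta> < 1/3" and C1: "C \<le> 1"
    and KEY: "(1 - C) * (1 - \<beta>) < 1 - 2*\<beta>"
    and l1: "1-2*\<beta> \<le> x1" and l2: "1-2*\<beta> \<le> x2" and l3: "1-2*\<beta> \<le> x3"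
    and m1: "y \<le> x1" and m2: "y \<le> x2" and m3: "y \<le> x3"
    and u1: "x1 \<le> y+\<beta>" and u2: "x2 \<le> y+\<beta>" and u3: "x3 \<le> y+\<beta>"
    and hs: "y + 2 - 3*\<beta> \<le> x1+x2+x3" and hy: "y \<le> 1"
  defines "g \<equiv> (1+3*\<beta>) + C*(y - min y \<beta>) - y - 2*(1-2*\<beta>)*\<beta>*(1/x1+1/x2+1/x3)"
  shows "0 \<le> g \<and> (g = 0 \<longrightarrow> (x1 = 1-2*\<beta> \<or> x1 = 2*\<beta>) \<and> (x2 = 1-2*\<beta> \<or> x2 = 2*\<beta>)
            \<and> (x3 = 1-2*\<beta> \<or> x3 = 2*\<beta>) \<and> x1+x2+x3 = y+2-3*\<beta>)"
proof (cases "y \<le> 1-2*\<beta>")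
  case True
  define a where "a = 1-2*\<beta>"
  define K where "K = 2*(1-2*\<beta>)*\<beta>"
  define U where "U = y+\<beta>"
  have a0: "a > 0" using b2 unfolding a_def by simp
  have ylo: "y \<ge> 1-3*\<beta>" using l1 u1 by simp
  have U0: "U > 0" using ylo b2 unfolding U_def by simp
  have K0: "K > 0" using b1 b2 unfolding K_def by simp
  define r1 where "r1 = (x1-a)*(U-x1)/(x1*a*U)"
  define r2 where "r2 = (x2-a)*(U-x2)/(x2*a*U)"
  define r3 where "r3 = (x3-a)*(U-x3)/(x3*a*U)"
  note c1 = chord[OF a0, of x1 U] and c2 = chord[OF a0, of x2 U] and c3 = chord[OF a0, of x3 U]
  have e1: "1/x1 = (a+U-x1)/(a*U) - r1" and r1: "r1 \<ge> 0"
    using c1 l1 u1 unfolding r1_def a_def U_def by auto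
  have e2: "1/x2 = (a+U-x2)/(a*U) - r2" and r2: "r2 \<ge> 0"
    using c2 l2 u2 unfolding r2_def a_def U_def by auto
  have e3: "1/x3 = (a+U-x3)/(a*U) - r3" and r3: "r3 \<ge> 0"
    using c3 l3 u3 unfolding r3_def a_def U_def by auto
  define s where "s = (x1+x2+x3 - (y+2-3*\<beta>))/(a*U)"
  have s0: "s \<ge> 0" using hs a0 U0 unfolding s_def by simp
  have sumx: "1/x1+1/x2+1/x3 = (1+2*y)/(a*U) - s - r1 - r2 - r3"
  proof -
    have "1/x1+1/x2+1/x3 = (3*(a+U) - (x1+x2+x3))/(a*U) - r1 - r2 - r3"
      using e1 e2 e3 a0 U0 by (simp add: field_simps)
    also have "\<dots> = (1+2*y)/(a*U) - s - r1 - r2 - r3"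
    proof -
      have h3: "3*(a+U) - (x1+x2+x3) = (1+2*y) - (x1+x2+x3 - (y+2-3*\<beta>))"
        unfolding a_def U_def by simp
      show ?thesis unfolding h3 s_def diff_divide_distrib[of "1+2*y"] by simp
    qed
    finally show ?thesis .
  qed
  define f where "f = (1+3*\<beta>) + C*(y - min y \<beta>) - y"
  define m where "m = f*U - 2*\<beta>*(1+2*y)"
  have Kpart: "K*((1+2*y)/(a*U)) = 2*\<beta>*(1+2*y)/U"
    using a0 U0 unfolding K_def a_def by (simp add: field_simps)
  have geq: "g = m/U + K*s + K*r1 + K*r2 + K*r3"
  proof -
    have "g = f - K*(1/x1+1/x2+1/x3)" unfolding g_def f_def K_def by simp
    also have "\<dots> = f - K*((1+2*y)/(a*U)) + K*s + K*r1 + K*r2 + K*r3"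
      unfolding sumx by (simp add: algebra_simps)
    also have "\<dots> = m/U + K*s + K*r1 + K*r2 + K*r3"
      unfolding Kpart m_def using U0 by (simp add: field_simps)
    finally show ?thesis .
  qed
  have mprop: "m \<ge> 0 \<and> (m = 0 \<longrightarrow> y = \<beta> \<or> y = 1-3*\<beta>)"
  proof (cases "y \<le> \<beta>")
    case True
    then have "m = (\<beta>-y)*(y-(1-3*\<beta>))" unfolding m_def f_def U_def
      by (simp add: min_def algebra_simps)
    then show ?thesis using True ylo by auto
  next
    case False
    have mq: "m = (y-\<beta>)*(a + (C-1)*(y+\<beta>))" unfolding m_def f_def U_def a_def
      using False by (simp add: min_def algebra_simps)
    moreover have "(1-C)*(y+\<beta>) \<le> (1-C)*(1-\<beta>)"
      using True C1 by (intro mult_left_mono) auto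
    moreover have "a + (C-1)*(y+\<beta>) = a - (1-C)*(y+\<beta>)" by (simp add: algebra_simps)
    ultimately have "a + (C-1)*(y+\<beta>) > 0" using KEY unfolding a_def by linarith
    moreover have "y - \<beta> > 0" using False by simp
    ultimately have "m > 0" using mq by simp
    then show ?thesis by simp
  qed
  have mU: "m/U \<ge> 0" using mprop U0 by simp
  have Ks: "K*s \<ge> 0" "K*r1 \<ge> 0" "K*r2 \<ge> 0" "K*r3 \<ge> 0" using K0 s0 r1 r2 r3 by auto
  have "0 \<le> g" using geq mU Ks by linarith
  moreover have "g = 0 \<longrightarrow> (x1 = 1-2*\<beta> \<or> x1 = 2*\<beta>) \<and> (x2 = 1-2*\<beta> \<or> x2 = 2*\<beta>)
            \<and> (x3 = 1-2*\<beta> \<or> x3 = 2*\<beta>) \<and> x1+x2+x3 = y+2-3*\<beta>"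
  proof
    assume g0: "g = 0"
    have z: "m/U = 0" "K*s = 0" "K*r1 = 0" "K*r2 = 0" "K*r3 = 0"
      using geq g0 mU Ks by linarith+
    have "m = 0" using z(1) U0 by simp
    then have yv: "y = \<beta> \<or> y = 1-3*\<beta>" using mprop by simp
    have "s = 0" "r1 = 0" "r2 = 0" "r3 = 0" using z K0 by auto
    then have sx: "x1+x2+x3 = y+2-3*\<beta>" and
      q1: "x1 = a \<or> x1 = U" and q2: "x2 = a \<or> x2 = U" and q3: "x3 = a \<or> x3 = U"
      using a0 U0 l1 l2 l3 u1 u2 u3 unfolding s_def r1_def r2_def r3_def a_def U_def
      by auto
    have Uv: "U = 2*\<beta> \<or> U = 1-2*\<beta>" using yv unfolding U_def by auto
    show "(x1 = 1-2*\<beta> \<or> x1 = 2*\<beta>) \<and> (x2 = 1-2*\<beta> \<or> x2 = 2*\<beta>)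
            \<and> (x3 = 1-2*\<beta> \<or> x3 = 2*\<beta>) \<and> x1+x2+x3 = y+2-3*\<beta>"
      using sx q1 q2 q3 Uv unfolding a_def by auto
  qed
  ultimately show ?thesis by blast
next
  case False
  define a where "a = 1-2*\<beta>"
  define K where "K = 2*(1-2*\<beta>)*\<beta>"
  define U where "U = y+\<beta>"
  have a0: "a > 0" using b2 unfolding a_def by simp
  have ya: "y > a" using False unfolding a_def by simp
  have y0: "y > 0" using ya a0 by simp
  have U0: "U > 0" using y0 b1 unfolding U_def by simp
  have K0: "K > 0" using b1 b2 unfolding K_def by simp
  have yb: "y > \<beta>" using ya b2 unfolding a_def by simp
  note c1 = chord[OF y0, of x1 U] and c2 = chord[OF y0, of x2 U] and c3 = chord[OF y0, of x3 U]
  have e1: "1/x1 \<le> (y+U-x1)/(y*U)" using c1 m1 u1 unfolding U_def by auto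
  have e2: "1/x2 \<le> (y+U-x2)/(y*U)" using c2 m2 u2 unfolding U_def by auto
  have e3: "1/x3 \<le> (y+U-x3)/(y*U)" using c3 m3 u3 unfolding U_def by auto
  have "1/x1+1/x2+1/x3 \<le> (3*(y+U) - (x1+x2+x3))/(y*U)"
    using e1 e2 e3 y0 U0 by (simp add: add_divide_distrib diff_divide_distrib)
  also have "\<dots> \<le> (5*y+6*\<beta>-2)/(y*U)"
    using hs y0 U0 unfolding U_def by (intro divide_right_mono) auto
  finally have sb: "1/x1+1/x2+1/x3 \<le> (5*y+6*\<beta>-2)/(y*U)" .
  define f where "f = 1+2*\<beta> + (C-1)*(y-\<beta>)"
  have gf: "g \<ge> f - K*((5*y+6*\<beta>-2)/(y*U))"
  proof -
    have "g = f - K*(1/x1+1/x2+1/x3)" unfolding g_def f_def K_def using yb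
      by (simp add: min_def algebra_simps)
    then show ?thesis using sb K0 by (smt (verit) mult_left_mono)
  qed
  define F where "F = 1+2*\<beta> - a*(y-\<beta>)/(1-\<beta>)"
  have b1m: "1 - \<beta> > 0" using b2 by simp
  have fF: "f > F"
  proof -
    have "(1-C) < a/(1-\<beta>)" using KEY b1m unfolding a_def by (simp add: field_simps)
    then have "(1-C)*(y-\<beta>) < a/(1-\<beta>)*(y-\<beta>)" using yb by (intro mult_strict_right_mono) auto
    then show ?thesis unfolding f_def F_def by (simp add: algebra_simps)
  qed
  define Q where "Q = -a*y^2 + \<beta>*(5-6*\<beta>)*y - 4*\<beta>*(1-\<beta>)*(1-3*\<beta>)"
  have Qid: "(1-\<beta>)*(F*y*U - K*(5*y+6*\<beta>-2)) = (y-a)*Q"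
    unfolding F_def Q_def U_def K_def a_def using b1m
    by (simp add: field_simps) (simp add: algebra_simps power2_eq_square)
  have Q0: "Q \<ge> 0"
  proof -
    have br: "\<beta>*(5-6*\<beta>) - a*y \<ge> 7*\<beta> - 6*\<beta>^2 - 1"
    proof -
      have "(1-y)*(1-2*\<beta>) \<ge> 0" using hy b2 by simp
      moreover have "\<beta>*(5-6*\<beta>) - a*y - (7*\<beta> - 6*\<beta>^2 - 1) = (1-y)*(1-2*\<beta>)"
        unfolding a_def by (simp add: power2_eq_square algebra_simps)
      ultimately show ?thesis by linarith
    qed
    have br0: "7*\<beta> - 6*\<beta>^2 - 1 \<ge> 0"
    proof -
      have "7*\<beta> - 6*\<beta>^2 - 1 = (6*\<beta>-1)*(1-\<beta>)" by (simp add: power2_eq_square algebra_simps)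
      then show ?thesis using b1 b2 by simp
    qed
    have "y*(\<beta>*(5-6*\<beta>) - a*y) \<ge> a*(7*\<beta> - 6*\<beta>^2 - 1)"
    proof -
      have "y*(\<beta>*(5-6*\<beta>) - a*y) \<ge> y*(7*\<beta> - 6*\<beta>^2 - 1)" using br y0 by (intro mult_left_mono) auto
      moreover have "y*(7*\<beta> - 6*\<beta>^2 - 1) \<ge> a*(7*\<beta> - 6*\<beta>^2 - 1)" using br0 ya by (intro mult_right_mono) auto
      ultimately show ?thesis by linarith
    qed
    moreover have "a*(7*\<beta> - 6*\<beta>^2 - 1) - 4*\<beta>*(1-\<beta>)*(1-3*\<beta>) = (4*\<beta>-1)*(1-\<beta>)"
      unfolding a_def by (simp add: power2_eq_square algebra_simps)
    moreover have "(4*\<beta>-1)*(1-\<beta>) \<ge> 0" using b1 b2 by simp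
    ultimately show ?thesis unfolding Q_def by (simp add: power2_eq_square algebra_simps)
  qed
  have "(1-\<beta>)*(F*y*U - K*(5*y+6*\<beta>-2)) \<ge> 0" using Qid Q0 ya by simp
  then have "F*y*U - K*(5*y+6*\<beta>-2) \<ge> 0" using b1m by (simp add: zero_le_mult_iff)
  then have "F - K*((5*y+6*\<beta>-2)/(y*U)) \<ge> 0" using y0 U0 by (simp add: field_simps)
  then have "g > 0" using gf fF by linarith
  then show ?thesis by simp
qed



definition nb :: "'a set \<Rightarrow> ('a \<Rightarrow> 'a \<Rightarrow> bool) \<Rightarrow> 'a \<Rightarrow> 'a set" where
  "nb V E v = {u\<in>V. E v u}"

lemma cdeg_common:
  assumes g: "simple_graph V E" and TV: "T \<subseteq> V" and cl: "\<forall>u\<in>T. \<forall>v\<in>T. u \<noteq> v \<longrightarrow> E u v"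
  shows "cdeg V E T = card {w\<in>V. \<forall>v\<in>T. E v w}"
proof -
  have fin: "finite V" using g by (simp add: simple_graph_def)
  have finT: "finite T" using TV fin finite_subset by blast
  have irr: "\<And>u. \<not> E u u" using g unfolding simple_graph_def by blast
  have sym: "\<And>u v. E u v \<Longrightarrow> E v u" using g unfolding simple_graph_def by blast
  let ?CN = "{w\<in>V. \<forall>v\<in>T. E v w}"
  have notin: "w \<notin> T" if "w \<in> ?CN" for w using that irr by auto
  have eq: "{S\<in>cliques V E (card T + 1). T\<subseteq>S} = (\<lambda>w. insert w T) ` ?CN"
  proof
    show "{S\<in>cliques V E (card T + 1). T\<subseteq>S} \<subseteq> (\<lambda>w. insert w T) ` ?CN"
    proof
      fix S assume S: "S \<in> {S\<in>cliques V E (card T + 1). T\<subseteq>S}"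
      then have SV: "S \<subseteq> V" and cS: "card S = card T + 1" and TS: "T \<subseteq> S"
        and clS: "\<forall>u\<in>S. \<forall>v\<in>S. u \<noteq> v \<longrightarrow> E u v" by (auto simp: cliques_def)
      have finS: "finite S" using SV fin finite_subset by blast
      have "card (S - T) = 1" using card_Diff_subset[OF finT TS] cS by simp
      then obtain w where w: "S - T = {w}" by (auto simp: card_Suc_eq)
      then have Sw: "S = insert w T" using TS by auto
      have "w \<in> ?CN" using w SV clS TS by blast
      then show "S \<in> (\<lambda>w. insert w T) ` ?CN" using Sw by blast
    qed
  next
    show "(\<lambda>w. insert w T) ` ?CN \<subseteq> {S\<in>cliques V E (card T + 1). T\<subseteq>S}"
    proof
      fix S assume "S \<in> (\<lambda>w. insert w T) ` ?CN"
      then obtain w where w: "w \<in> ?CN" and Sw: "S = insert w T" by blast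
      have "card S = card T + 1" using Sw notin[OF w] finT by simp
      moreover have "S \<subseteq> V" using Sw w TV by auto
      moreover have "\<forall>u\<in>S. \<forall>v\<in>S. u \<noteq> v \<longrightarrow> E u v" using Sw w cl sym by auto
      ultimately show "S \<in> {S\<in>cliques V E (card T + 1). T\<subseteq>S}"
        using Sw by (auto simp: cliques_def)
    qed
  qed
  have inj: "inj_on (\<lambda>w. insert w T) ?CN"
  proof (rule inj_onI)
    fix x y assume x: "x \<in> ?CN" and y: "y \<in> ?CN" and "insert x T = insert y T"
    then have "x \<in> insert y T" by blast
    then show "x = y" using notin[OF x] by blast
  qed
  show ?thesis unfolding cdeg_def eq using card_image[OF inj] by simp
qed

lemma card_facts:
  assumes fin: "finite V" and AV: "A \<subseteq> V" and BV: "B \<subseteq> V" and CV: "C \<subseteq> V"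
  shows "card A + card B \<le> card (A \<inter> B) + card V"
    and "card (A \<inter> B \<inter> C) \<le> card (A \<inter> B)"
    and "card (A \<inter> B) \<le> card (A \<inter> B \<inter> C) + (card V - card C)"
    and "card A + card B + card C + card (A \<inter> B \<inter> C) \<le> card V + card (A \<inter> B) + card (A \<inter> C) + card (B \<inter> C)"
proof -
  have fA: "finite A" and fB: "finite B" and fC: "finite C"
    using fin AV BV CV finite_subset by blast+
  have u1: "card A + card B = card (A \<union> B) + card (A \<inter> B)" using card_Un_Int[OF fA fB] .
  have "card (A \<union> B) \<le> card V" using AV BV fin by (intro card_mono) auto
  then show "card A + card B \<le> card (A \<inter> B) + card V" using u1 by linarith
  show "card (A \<inter> B \<inter> C) \<le> card (A \<inter> B)" using fA by (intro card_mono) auto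
  have "A \<inter> B \<subseteq> (A \<inter> B \<inter> C) \<union> (V - C)" using AV by auto
  then have "card (A \<inter> B) \<le> card ((A \<inter> B \<inter> C) \<union> (V - C))" using fin fA by (intro card_mono) auto
  also have "\<dots> \<le> card (A \<inter> B \<inter> C) + card (V - C)" by (rule card_Un_le)
  also have "card (V - C) = card V - card C" using card_Diff_subset[OF fC CV] .
  finally show "card (A \<inter> B) \<le> card (A \<inter> B \<inter> C) + (card V - card C)" .
  have fAB: "finite (A \<union> B)" using fA fB by simp
  have u2: "card (A \<union> B) + card C = card (A \<union> B \<union> C) + card ((A \<union> B) \<inter> C)"
    using card_Un_Int[OF fAB fC] .
  have e1: "(A \<union> B) \<inter> C = (A \<inter> C) \<union> (B \<inter> C)" by auto
  have e2: "(A \<inter> C) \<inter> (B \<inter> C) = A \<inter> B \<inter> C" by auto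
  have u3: "card (A \<inter> C) + card (B \<inter> C) = card ((A \<inter> C) \<union> (B \<inter> C)) + card (A \<inter> B \<inter> C)"
    using card_Un_Int[of "A \<inter> C" "B \<inter> C"] fA fB e2 by simp
  have "card (A \<union> B \<union> C) \<le> card V" using AV BV CV fin by (intro card_mono) auto
  then show "card A + card B + card C + card (A \<inter> B \<inter> C) \<le> card V + card (A \<inter> B) + card (A \<inter> C) + card (B \<inter> C)"
    using u1 u2[unfolded e1] u3 by linarith
qed



lemma pos_div_ge: "(0::real) < n \<Longrightarrow> c*n \<le> p \<Longrightarrow> c \<le> p/n"
  by (simp add: pos_le_divide_eq)
lemma pos_div_le: "(0::real) < n \<Longrightarrow> p \<le> c*n \<Longrightarrow> p/n \<le> c"
  by (simp add: pos_divide_le_eq)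

definition gT :: "real \<Rightarrow> 'a set \<Rightarrow> ('a \<Rightarrow> 'a \<Rightarrow> bool) \<Rightarrow> 'a set \<Rightarrow> real" where
  "gT \<beta> V E T = (1+3*\<beta>) + (2 / (1 - 2*\<beta>) * (1 - 3*\<beta> + (4*\<beta> - 1) / (29 - 75*\<beta>))) * Dplus \<beta> V E T
     - Dn V E T - 2*(1-2*\<beta>)*\<beta>*(\<Sum>e\<in>{e\<in>cliques V E 2. e \<subseteq> T}. 1 / Dn V E e)"

lemma edge_common:
  assumes g: "simple_graph V E" and b2: "\<beta> < 1/3"
    and md: "\<forall>v\<in>V. real (vdeg V E v) \<ge> (1 - \<beta>) * real (card V)"
    and e: "E u v"
  shows "real (card (nb V E u \<inter> nb V E v)) \<ge> (1-2*\<beta>) * real (card V)"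
    and "cdeg V E {u,v} = card (nb V E u \<inter> nb V E v)"
    and "\<exists>w. E u w \<and> E v w"
proof -
  have fin: "finite V" using g by (simp add: simple_graph_def)
  have uv: "u \<in> V" "v \<in> V" using g e unfolding simple_graph_def by blast+
  have irr: "\<And>x. \<not> E x x" using g unfolding simple_graph_def by blast
  have sym: "\<And>x y. E x y \<Longrightarrow> E y x" using g unfolding simple_graph_def by blast
  have n0: "card V > 0" using uv fin card_gt_0_iff by blast
  have sub: "nb V E u \<subseteq> V" "nb V E v \<subseteq> V" by (auto simp: nb_def)
  have cf: "card (nb V E u) + card (nb V E v) \<le> card (nb V E u \<inter> nb V E v) + card V"
    using card_facts(1)[OF fin sub(1) sub(2) sub(1)] .
  have du: "real (card (nb V E u)) \<ge> (1-\<beta>) * real (card V)"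
    using md uv unfolding vdeg_def nb_def by auto
  have dv: "real (card (nb V E v)) \<ge> (1-\<beta>) * real (card V)"
    using md uv unfolding vdeg_def nb_def by auto
  have cfr: "real (card (nb V E u)) + real (card (nb V E v)) \<le> real (card (nb V E u \<inter> nb V E v)) + real (card V)"
    using cf by linarith
  show ge: "real (card (nb V E u \<inter> nb V E v)) \<ge> (1-2*\<beta>) * real (card V)"
    using cfr du dv by (simp add: algebra_simps)
  have "{x\<in>V. \<forall>z\<in>{u,v}. E z x} = nb V E u \<inter> nb V E v" by (auto simp: nb_def)
  moreover have "cdeg V E {u,v} = card {x\<in>V. \<forall>z\<in>{u,v}. E z x}"
    using uv e sym by (intro cdeg_common[OF g]) auto
  ultimately show "cdeg V E {u,v} = card (nb V E u \<inter> nb V E v)" by simp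
  have "(1-2*\<beta>) * real (card V) > 0" using b2 n0 by simp
  then have "card (nb V E u \<inter> nb V E v) > 0" using ge by linarith
  then obtain w where "w \<in> nb V E u \<inter> nb V E v" by (metis card_gt_0_iff ex_in_conv)
  then show "\<exists>w. E u w \<and> E v w" by (auto simp: nb_def)
qed

lemma tri_graph:
  assumes g: "simple_graph V E" and b1: "1/4 \<le> \<beta>" and b2: "\<beta> < 1/3"
    and md: "\<forall>v\<in>V. real (vdeg V E v) \<ge> (1 - \<beta>) * real (card V)"
    and euv: "E u v" and euw: "E u w" and evw: "E v w"
  shows "0 \<le> gT \<beta> V E {u,v,w} \<and> (gT \<beta> V E {u,v,w} = 0 \<longrightarrow>
     real (vdeg V E u) = (1-\<beta>) * real (card V) \<and> real (vdeg V E v) = (1-\<beta>) * real (card V)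
     \<and> real (vdeg V E w) = (1-\<beta>) * real (card V)
     \<and> (Dn V E {u,v} = 1-2*\<beta> \<or> Dn V E {u,v} = 2*\<beta>)
     \<and> (Dn V E {u,w} = 1-2*\<beta> \<or> Dn V E {u,w} = 2*\<beta>)
     \<and> (Dn V E {v,w} = 1-2*\<beta> \<or> Dn V E {v,w} = 2*\<beta>))"
proof -
  have fin: "finite V" using g by (simp add: simple_graph_def)
  have inV: "u \<in> V" "v \<in> V" "w \<in> V" using g euv euw evw unfolding simple_graph_def by blast+
  have irr: "\<And>x. \<not> E x x" using g unfolding simple_graph_def by blast
  have sym: "\<And>x y. E x y \<Longrightarrow> E y x" using g unfolding simple_graph_def by blast
  have dist: "u \<noteq> v" "u \<noteq> w" "v \<noteq> w" using irr euv euw evw by auto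
  have n0: "card V > 0" using inV fin card_gt_0_iff by blast
  define n where "n = real (card V)"
  have np: "n > 0" using n0 unfolding n_def by simp
  define A where "A = nb V E u"
  define B where "B = nb V E v"
  define Cc where "Cc = nb V E w"
  have sub: "A \<subseteq> V" "B \<subseteq> V" "Cc \<subseteq> V" by (auto simp: nb_def A_def B_def Cc_def)
  have dA: "real (card A) \<ge> (1-\<beta>)*n" using md inV unfolding vdeg_def nb_def A_def n_def by auto
  have dB: "real (card B) \<ge> (1-\<beta>)*n" using md inV unfolding vdeg_def nb_def B_def n_def by auto
  have dC: "real (card Cc) \<ge> (1-\<beta>)*n" using md inV unfolding vdeg_def nb_def Cc_def n_def by auto
  have vA: "vdeg V E u = card A" "vdeg V E v = card B" "vdeg V E w = card Cc"
    unfolding vdeg_def A_def B_def Cc_def nb_def by auto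
  have cd1: "cdeg V E {u,v} = card (A \<inter> B)" using edge_common(2)[OF g b2 md euv] unfolding A_def B_def .
  have cd2: "cdeg V E {u,w} = card (A \<inter> Cc)" using edge_common(2)[OF g b2 md euw] unfolding A_def Cc_def .
  have cd3: "cdeg V E {v,w} = card (B \<inter> Cc)" using edge_common(2)[OF g b2 md evw] unfolding B_def Cc_def .
  have cdT: "cdeg V E {u,v,w} = card (A \<inter> B \<inter> Cc)"
  proof -
    have "{x\<in>V. \<forall>z\<in>{u,v,w}. E z x} = A \<inter> B \<inter> Cc" by (auto simp: nb_def A_def B_def Cc_def)
    moreover have "cdeg V E {u,v,w} = card {x\<in>V. \<forall>z\<in>{u,v,w}. E z x}"
      using inV euv euw evw sym by (intro cdeg_common[OF g]) auto
    ultimately show ?thesis by simp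
  qed
  define a1 where "a1 = real (card (A \<inter> B))"
  define a2 where "a2 = real (card (A \<inter> Cc))"
  define a3 where "a3 = real (card (B \<inter> Cc))"
  define aT where "aT = real (card (A \<inter> B \<inter> Cc))"
  have i1: "A \<inter> Cc \<inter> B = A \<inter> B \<inter> Cc" "B \<inter> Cc \<inter> A = A \<inter> B \<inter> Cc" by auto
  note f1 = card_facts[OF fin sub(1) sub(2) sub(3)]
  note f2 = card_facts[OF fin sub(1) sub(3) sub(2), unfolded i1]
  note f3 = card_facts[OF fin sub(2) sub(3) sub(1), unfolded i1]
  have cC: "card Cc \<le> card V" "card B \<le> card V" "card A \<le> card V"
    using sub fin by (auto intro: card_mono)
  have l1: "a1 \<ge> (1-2*\<beta>)*n" using f1(1) dA dB unfolding a1_def n_def by (simp add: algebra_simps)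
  have l2: "a2 \<ge> (1-2*\<beta>)*n" using f2(1) dA dC unfolding a2_def n_def by (simp add: algebra_simps)
  have l3: "a3 \<ge> (1-2*\<beta>)*n" using f3(1) dB dC unfolding a3_def n_def by (simp add: algebra_simps)
  have m1: "aT \<le> a1" using f1(2) unfolding aT_def a1_def by simp
  have m2: "aT \<le> a2" using f2(2) unfolding aT_def a2_def by simp
  have m3: "aT \<le> a3" using f3(2) unfolding aT_def a3_def by simp
  have u1: "a1 \<le> aT + \<beta>*n"
  proof -
    have "real (card (A \<inter> B)) \<le> real (card (A \<inter> B \<inter> Cc)) + (real (card V) - real (card Cc))"
      using f1(3) cC by (simp add: of_nat_diff)
    then show ?thesis using dC unfolding a1_def aT_def n_def by (simp add: algebra_simps)
  qed
  have u2: "a2 \<le> aT + \<beta>*n"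
  proof -
    have "real (card (A \<inter> Cc)) \<le> real (card (A \<inter> B \<inter> Cc)) + (real (card V) - real (card B))"
      using f2(3) cC by (simp add: of_nat_diff)
    then show ?thesis using dB unfolding a2_def aT_def n_def by (simp add: algebra_simps)
  qed
  have u3: "a3 \<le> aT + \<beta>*n"
  proof -
    have "real (card (B \<inter> Cc)) \<le> real (card (A \<inter> B \<inter> Cc)) + (real (card V) - real (card A))"
      using f3(3) cC by (simp add: of_nat_diff)
    then show ?thesis using dA unfolding a3_def aT_def n_def by (simp add: algebra_simps)
  qed
  have dsum: "real (card A) + real (card B) + real (card Cc) + aT \<le> n + a1 + a2 + a3"
    using f1(4) unfolding a1_def a2_def a3_def aT_def n_def by linarith
  have hs: "aT + (2 - 3*\<beta>)*n \<le> a1 + a2 + a3" using dsum dA dB dC by (simp add: algebra_simps)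
  have hy: "aT \<le> n"
  proof -
    have "card (A \<inter> B \<inter> Cc) \<le> card V" using sub fin by (intro card_mono) auto
    then show ?thesis unfolding aT_def n_def by simp
  qed
  define x1 where "x1 = a1/n"
  define x2 where "x2 = a2/n"
  define x3 where "x3 = a3/n"
  define y where "y = aT/n"
  have X1: "Dn V E {u,v} = x1" unfolding Dn_def x1_def a1_def n_def cd1 ..
  have X2: "Dn V E {u,w} = x2" unfolding Dn_def x2_def a2_def n_def cd2 ..
  have X3: "Dn V E {v,w} = x3" unfolding Dn_def x3_def a3_def n_def cd3 ..
  have Y: "Dn V E {u,v,w} = y" unfolding Dn_def y_def aT_def n_def cdT ..
  have L1: "1-2*\<beta> \<le> x1" unfolding x1_def by (rule pos_div_ge[OF np l1])
  have L2: "1-2*\<beta> \<le> x2" unfolding x2_def by (rule pos_div_ge[OF np l2])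
  have L3: "1-2*\<beta> \<le> x3" unfolding x3_def by (rule pos_div_ge[OF np l3])
  have M1: "y \<le> x1" unfolding x1_def y_def using m1 np by (simp add: divide_right_mono)
  have M2: "y \<le> x2" unfolding x2_def y_def using m2 np by (simp add: divide_right_mono)
  have M3: "y \<le> x3" unfolding x3_def y_def using m3 np by (simp add: divide_right_mono)
  have U1: "x1 \<le> y + \<beta>" unfolding x1_def y_def using u1 np by (simp add: field_simps)
  have U2: "x2 \<le> y + \<beta>" unfolding x2_def y_def using u2 np by (simp add: field_simps)
  have U3: "x3 \<le> y + \<beta>" unfolding x3_def y_def using u3 np by (simp add: field_simps)
  have HS: "y + 2 - 3*\<beta> \<le> x1 + x2 + x3"
  proof -
    have "(aT + (2 - 3*\<beta>)*n)/n \<le> (a1+a2+a3)/n" using hs np by (simp add: divide_right_mono)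
    moreover have "(aT + (2 - 3*\<beta>)*n)/n = y + 2 - 3*\<beta>" using np unfolding y_def
      by (simp add: add_divide_distrib)
    moreover have "(a1+a2+a3)/n = x1+x2+x3" unfolding x1_def x2_def x3_def by (simp add: add_divide_distrib)
    ultimately show ?thesis by simp
  qed
  have HY: "y \<le> 1" unfolding y_def using hy np by simp
  note KC = keyC[OF b1 b2]
  note TI = tri_ineq[OF b1 b2 KC L1 L2 L3 M1 M2 M3 U1 U2 U3 HS HY]
  have c3: "card {u,v,w} = 3" using dist by simp
  have edges: "{e\<in>cliques V E 2. e \<subseteq> {u,v,w}} = {{u,v},{u,w},{v,w}}"
  proof
    show "{e\<in>cliques V E 2. e \<subseteq> {u,v,w}} \<subseteq> {{u,v},{u,w},{v,w}}"
    proof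
      fix e assume "e \<in> {e\<in>cliques V E 2. e \<subseteq> {u,v,w}}"
      then have c2: "card e = 2" and es: "e \<subseteq> {u,v,w}" by (auto simp: cliques_def)
      then obtain p q where e: "e = {p,q}" "p \<noteq> q" by (auto simp: card_2_iff)
      then show "e \<in> {{u,v},{u,w},{v,w}}" using es by auto
    qed
  next
    show "{{u,v},{u,w},{v,w}} \<subseteq> {e\<in>cliques V E 2. e \<subseteq> {u,v,w}}"
      using dist inV euv euw evw sym by (auto simp: cliques_def)
  qed
  have sumE: "(\<Sum>e\<in>{e\<in>cliques V E 2. e \<subseteq> {u,v,w}}. 1 / Dn V E e) = 1/x1 + 1/x2 + 1/x3"
    unfolding edges using dist by (simp add: X1 X2 X3 doubleton_eq_iff)
  have DP: "Dplus \<beta> V E {u,v,w} = y - min y \<beta>"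
    unfolding Dplus_def Dminus_def c3 Y by simp
  have gq: "gT \<beta> V E {u,v,w} = (1+3*\<beta>) + (2 / (1 - 2*\<beta>) * (1 - 3*\<beta> + (4*\<beta> - 1) / (29 - 75*\<beta>)))*(y - min y \<beta>) - y - 2*(1-2*\<beta>)*\<beta>*(1/x1+1/x2+1/x3)"
    unfolding gT_def sumE DP Y ..
  show ?thesis
  proof (intro conjI impI)
    show "0 \<le> gT \<beta> V E {u,v,w}" using TI gq by simp
  next
    assume g0: "gT \<beta> V E {u,v,w} = 0"
    then have R: "(x1 = 1-2*\<beta> \<or> x1 = 2*\<beta>) \<and> (x2 = 1-2*\<beta> \<or> x2 = 2*\<beta>)
            \<and> (x3 = 1-2*\<beta> \<or> x3 = 2*\<beta>) \<and> x1+x2+x3 = y+2-3*\<beta>" using TI gq by simp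
    then show "Dn V E {u,v} = 1-2*\<beta> \<or> Dn V E {u,v} = 2*\<beta>"
      "Dn V E {u,w} = 1-2*\<beta> \<or> Dn V E {u,w} = 2*\<beta>"
      "Dn V E {v,w} = 1-2*\<beta> \<or> Dn V E {v,w} = 2*\<beta>" using X1 X2 X3 by auto
    have "a1 + a2 + a3 = aT + (2 - 3*\<beta>)*n"
    proof -
      have "x1+x2+x3 = y+2-3*\<beta>" using R by simp
      then have "(a1+a2+a3)/n = (aT + (2-3*\<beta>)*n)/n" unfolding x1_def x2_def x3_def y_def
        using np by (simp add: field_simps)
      then show ?thesis using np by simp
    qed
    then have tot: "real (card A) + real (card B) + real (card Cc) \<le> (1-\<beta>)*n + (1-\<beta>)*n + (1-\<beta>)*n" using dsum by (simp add: algebra_simps)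
    have rv: "real (vdeg V E u) = real (card A)" "real (vdeg V E v) = real (card B)" "real (vdeg V E w) = real (card Cc)"
      using vA by simp_all
    show "real (vdeg V E u) = (1-\<beta>) * real (card V)" using tot dA dB dC rv unfolding n_def by linarith
    show "real (vdeg V E v) = (1-\<beta>) * real (card V)" using tot dA dB dC rv unfolding n_def by linarith
    show "real (vdeg V E w) = (1-\<beta>) * real (card V)" using tot dA dB dC rv unfolding n_def by linarith
  qed
qed



theorem mainTheorem15:
  fixes V :: "'a set" and E :: "'a \<Rightarrow> 'a \<Rightarrow> bool" and \<beta> :: real
  assumes graph: "simple_graph V E"
    and beta: "1/4 \<le> \<beta>" "\<beta> < 1/3"
    and mindeg_ge: "\<forall>v\<in>V. real (vdeg V E v) \<ge> (1 - \<beta>) * real (card V)"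
    and mindeg_att: "\<exists>v\<in>V. real (vdeg V E v) = (1 - \<beta>) * real (card V)"
  shows "((1 + 3*\<beta>) * real (kcl V E 3)
           + 2 / (1 - 2*\<beta>) * (1 - 3*\<beta> + (4*\<beta> - 1) / (29 - 75*\<beta>))
             * (\<Sum>T\<in>cliques V E 3. Dplus \<beta> V E T)
         \<ge> 2 * (1 - 2*\<beta>) * \<beta> * real (card V) * real (kcl V E 2)
           + 4 * real (kcl V E 4) / real (card V))
       \<and> ((1 + 3*\<beta>) * real (kcl V E 3)
           + 2 / (1 - 2*\<beta>) * (1 - 3*\<beta> + (4*\<beta> - 1) / (29 - 75*\<beta>))
             * (\<Sum>T\<in>cliques V E 3. Dplus \<beta> V E T)
         = 2 * (1 - 2*\<beta>) * \<beta> * real (card V) * real (kcl V E 2)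
           + 4 * real (kcl V E 4) / real (card V)
       \<longrightarrow> (\<forall>v\<in>V. real (vdeg V E v) = (1 - \<beta>) * real (card V))
         \<and> (\<forall>e\<in>cliques V E 2. Dn V E e = 1 - 2*\<beta> \<or> Dn V E e = 2*\<beta>))"
proof -
  have fin: "finite V" using graph by (simp add: simple_graph_def)
  have irr: "\<And>x. \<not> E x x" using graph unfolding simple_graph_def by blast
  have sym: "\<And>x y. E x y \<Longrightarrow> E y x" using graph unfolding simple_graph_def by blast
  have EV: "\<And>x y. E x y \<Longrightarrow> x \<in> V \<and> y \<in> V" using graph unfolding simple_graph_def by blast
  obtain v0 where v0: "v0 \<in> V" using mindeg_att by blast
  have n0: "card V > 0" using v0 fin card_gt_0_iff by blast
  define n where "n = real (card V)"
  have np: "n > 0" using n0 unfolding n_def by simp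
  define C where "C = 2 / (1 - 2*\<beta>) * (1 - 3*\<beta> + (4*\<beta> - 1) / (29 - 75*\<beta>))"
  define K where "K = 2*(1-2*\<beta>)*\<beta>"
  have finCl: "\<And>t. finite (cliques V E t)"
  proof -
    fix t have "cliques V E t \<subseteq> Pow V" by (auto simp: cliques_def)
    then show "finite (cliques V E t)" using fin by (meson finite_Pow_iff finite_subset)
  qed
  have tri: "\<And>T. T \<in> cliques V E 3 \<Longrightarrow> \<exists>u v w. T = {u,v,w} \<and> E u v \<and> E u w \<and> E v w"
  proof -
    fix T assume T: "T \<in> cliques V E 3"
    then have "card T = 3" and cl: "\<forall>u\<in>T. \<forall>v\<in>T. u \<noteq> v \<longrightarrow> E u v" by (auto simp: cliques_def)
    then obtain u v w where "T = {u,v,w}" "u \<noteq> v" "v \<noteq> w" "u \<noteq> w" by (auto simp: card_3_iff)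
    then show "\<exists>u v w. T = {u,v,w} \<and> E u v \<and> E u w \<and> E v w" using cl by blast
  qed
  have gnn: "\<And>T. T \<in> cliques V E 3 \<Longrightarrow> 0 \<le> gT \<beta> V E T"
    using tri tri_graph[OF graph beta(1) beta(2) mindeg_ge] by blast
  have S1: "(\<Sum>T\<in>cliques V E 3. \<Sum>e\<in>{e\<in>cliques V E 2. e \<subseteq> T}. 1 / Dn V E e) = n * real (kcl V E 2)"
  proof -
    have "(\<Sum>T\<in>cliques V E 3. \<Sum>e\<in>{e\<in>cliques V E 2. e \<subseteq> T}. 1 / Dn V E e)
        = (\<Sum>e\<in>cliques V E 2. \<Sum>T\<in>{T\<in>cliques V E 3. e \<subseteq> T}. 1 / Dn V E e)"
      by (rule sum.swap_restrict[OF finCl finCl])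
    also have "\<dots> = (\<Sum>e\<in>cliques V E 2. n)"
    proof (rule sum.cong[OF refl])
      fix e assume e: "e \<in> cliques V E 2"
      then have ce: "card e = 2" by (simp add: cliques_def)
      then obtain x y where exy: "e = {x,y}" "x \<noteq> y" by (auto simp: card_2_iff)
      have "E x y" using e exy by (auto simp: cliques_def)
      then have c1: "real (card (nb V E x \<inter> nb V E y)) \<ge> (1-2*\<beta>) * n"
        and c2: "cdeg V E e = card (nb V E x \<inter> nb V E y)"
        using edge_common(1,2)[OF graph beta(2) mindeg_ge, of x y] exy unfolding n_def by auto
      have "(1-2*\<beta>) * n > 0" using beta(2) np by simp
      then have pos: "real (cdeg V E e) > 0" using c1 c2 by linarith
      have cd: "cdeg V E e = card {T\<in>cliques V E 3. e \<subseteq> T}" unfolding cdeg_def ce by simp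
      show "(\<Sum>T\<in>{T\<in>cliques V E 3. e \<subseteq> T}. 1 / Dn V E e) = n"
        using pos np unfolding Dn_def n_def cd by simp
    qed
    also have "\<dots> = n * real (kcl V E 2)" by (simp add: kcl_def)
    finally show ?thesis .
  qed
  have S2: "(\<Sum>T\<in>cliques V E 3. Dn V E T) = 4 * real (kcl V E 4) / n"
  proof -
    have "(\<Sum>T\<in>cliques V E 3. cdeg V E T) = (\<Sum>T\<in>cliques V E 3. \<Sum>S\<in>{S\<in>cliques V E 4. T \<subseteq> S}. (1::nat))"
    proof (rule sum.cong[OF refl])
      fix T assume "T \<in> cliques V E 3"
      then have "card T = 3" by (simp add: cliques_def)
      then show "cdeg V E T = (\<Sum>S\<in>{S\<in>cliques V E 4. T \<subseteq> S}. (1::nat))" unfolding cdeg_def by simp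
    qed
    also have "\<dots> = (\<Sum>S\<in>cliques V E 4. \<Sum>T\<in>{T\<in>cliques V E 3. T \<subseteq> S}. (1::nat))"
      by (rule sum.swap_restrict[OF finCl finCl])
    also have "\<dots> = (\<Sum>S\<in>cliques V E 4. 4)"
    proof (rule sum.cong[OF refl])
      fix S assume S: "S \<in> cliques V E 4"
      then have SV: "S \<subseteq> V" and cS: "card S = 4" and cl: "\<forall>u\<in>S. \<forall>v\<in>S. u \<noteq> v \<longrightarrow> E u v"
        by (auto simp: cliques_def)
      have finS: "finite S" using SV fin finite_subset by blast
      have "{T\<in>cliques V E 3. T \<subseteq> S} = {T. T \<subseteq> S \<and> card T = 3}"
        using SV cl by (auto simp: cliques_def)
      then have "card {T\<in>cliques V E 3. T \<subseteq> S} = 4"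
        using n_subsets[OF finS, of 3] cS by (simp add: numeral_eq_Suc)
      then show "(\<Sum>T\<in>{T\<in>cliques V E 3. T \<subseteq> S}. (1::nat)) = 4" by simp
    qed
    also have "\<dots> = 4 * kcl V E 4" by (simp add: kcl_def)
    finally have nat: "(\<Sum>T\<in>cliques V E 3. cdeg V E T) = 4 * kcl V E 4" .
    have "(\<Sum>T\<in>cliques V E 3. Dn V E T) = (\<Sum>T\<in>cliques V E 3. real (cdeg V E T)) / n"
      unfolding Dn_def n_def by (simp add: sum_divide_distrib)
    also have "(\<Sum>T\<in>cliques V E 3. real (cdeg V E T)) = real (4 * kcl V E 4)"
      by (metis nat of_nat_sum)
    finally show ?thesis by simp
  qed
  have Dsum: "(\<Sum>T\<in>cliques V E 3. gT \<beta> V E T)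
     = (1 + 3*\<beta>) * real (kcl V E 3) + C * (\<Sum>T\<in>cliques V E 3. Dplus \<beta> V E T)
       - (\<Sum>T\<in>cliques V E 3. Dn V E T)
       - K * (\<Sum>T\<in>cliques V E 3. \<Sum>e\<in>{e\<in>cliques V E 2. e \<subseteq> T}. 1 / Dn V E e)"
    unfolding gT_def C_def[symmetric] K_def[symmetric]
    by (simp add: sum.distrib sum_subtractf sum_distrib_left kcl_def algebra_simps)
  have main: "(1 + 3*\<beta>) * real (kcl V E 3) + C * (\<Sum>T\<in>cliques V E 3. Dplus \<beta> V E T)
       - (2 * (1 - 2*\<beta>) * \<beta> * real (card V) * real (kcl V E 2) + 4 * real (kcl V E 4) / real (card V))
     = (\<Sum>T\<in>cliques V E 3. gT \<beta> V E T)"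
    unfolding Dsum S1 S2 K_def n_def by (simp add: algebra_simps)
  have nonneg: "(\<Sum>T\<in>cliques V E 3. gT \<beta> V E T) \<ge> 0" using gnn by (simp add: sum_nonneg)
  show ?thesis
  proof (intro conjI impI)
    show "(1 + 3*\<beta>) * real (kcl V E 3)
           + 2 / (1 - 2*\<beta>) * (1 - 3*\<beta> + (4*\<beta> - 1) / (29 - 75*\<beta>))
             * (\<Sum>T\<in>cliques V E 3. Dplus \<beta> V E T)
         \<ge> 2 * (1 - 2*\<beta>) * \<beta> * real (card V) * real (kcl V E 2)
           + 4 * real (kcl V E 4) / real (card V)"
      using main nonneg unfolding C_def by linarith
  next
    assume eq: "(1 + 3*\<beta>) * real (kcl V E 3)
           + 2 / (1 - 2*\<beta>) * (1 - 3*\<beta> + (4*\<beta> - 1) / (29 - 75*\<beta>))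
             * (\<Sum>T\<in>cliques V E 3. Dplus \<beta> V E T)
         = 2 * (1 - 2*\<beta>) * \<beta> * real (card V) * real (kcl V E 2)
           + 4 * real (kcl V E 4) / real (card V)"
    then have "(\<Sum>T\<in>cliques V E 3. gT \<beta> V E T) = 0" using main unfolding C_def by linarith
    then have z: "\<forall>T\<in>cliques V E 3. gT \<beta> V E T = 0"
      using sum_nonneg_eq_0_iff[of "cliques V E 3" "gT \<beta> V E"] finCl gnn by blast
    have in3: "{x,y,z} \<in> cliques V E 3" if "E x y" "E x z" "E y z" for x y z
    proof -
      have "x \<noteq> y" "x \<noteq> z" "y \<noteq> z" using that irr by auto
      then show ?thesis using that EV sym by (auto simp: cliques_def)
    qed
    show "\<forall>v\<in>V. real (vdeg V E v) = (1 - \<beta>) * real (card V)"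
    proof
      fix v assume v: "v \<in> V"
      have "real (vdeg V E v) \<ge> (1-\<beta>) * n" using mindeg_ge v unfolding n_def by blast
      moreover have "(1-\<beta>) * n > 0" using np beta(2) by simp
      ultimately have "vdeg V E v > 0" by linarith
      then obtain u where "u \<in> {u\<in>V. E v u}" unfolding vdeg_def by (metis card_gt_0_iff ex_in_conv)
      then have evu: "E v u" by simp
      obtain w where w: "E v w" "E u w" using edge_common(3)[OF graph beta(2) mindeg_ge evu] by blast
      have "gT \<beta> V E {v,u,w} = 0" using z in3[OF evu w] by blast
      then show "real (vdeg V E v) = (1 - \<beta>) * real (card V)"
        using tri_graph[OF graph beta(1) beta(2) mindeg_ge evu w] by blast
    qed
    show "\<forall>e\<in>cliques V E 2. Dn V E e = 1 - 2*\<beta> \<or> Dn V E e = 2*\<beta>"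
    proof
      fix e assume e: "e \<in> cliques V E 2"
      then have ce: "card e = 2" by (simp add: cliques_def)
      then obtain x y where exy: "e = {x,y}" "x \<noteq> y" by (auto simp: card_2_iff)
      have exy2: "E x y" using e exy by (auto simp: cliques_def)
      obtain w where w: "E x w" "E y w" using edge_common(3)[OF graph beta(2) mindeg_ge exy2] by blast
      have "gT \<beta> V E {x,y,w} = 0" using z in3[OF exy2 w] by blast
      then show "Dn V E e = 1 - 2*\<beta> \<or> Dn V E e = 2*\<beta>"
        using tri_graph[OF graph beta(1) beta(2) mindeg_ge exy2 w] exy(1) by blast
    qed
  qed
qed


end
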